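(* Let $\phi:\mathbb{R}^{n\times n}\to\mathbb{R}$ be differentiable and $L$-gradient Lipschitz, and let $M^\star=\arg\min\phi$ satisfy $M^\star\succeq0$. Let $f(X)=\phi(XX^T)$. Then for all $X,V\in\mathbb{R}^{n\times r}$ and $\eta\ge0$ with $\lambda_{\min}(X^TX)+\eta>0$, \[ f(X+V)\le f(X)+\langle\nabla f(X),V\rangle+\frac{\ell_{X,\eta}}2\|V\|_{X,\eta}^2, \] where \[ \ell_{X,\eta}=L\left[4+\frac{2\|XX^T-M^\star\|_F+4\|V\|_{X,\eta}}{\lambda_{\min}(X^TX)+\eta}+\left(\frac{\|V\|_{X,\eta}}{\lambda_{\min}(X^TX)+\eta}\right)^2\right]. \]
   Context: $\phi$ is $L$-gradient Lipschitz if $\|\nabla\phi(M+E)-\nabla\phi(M)\|_F\le L\|E\|_F$ for all $M,E$. The local norm is $\|V\|_{X,\eta}=\|V(X^TX+\eta I)^{1/2}\|_F$. $\langle A,B\rangle=\operatorname{tr}(A^TB)$. *)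

theory Defs
  imports "HOL-Analysis.Analysis"
begin

text \<open>Matrices in R^(m x k) are represented as real^'k^'m (rows indexed by 'm).
  On this type, norm is the Frobenius norm and the inner product is tr(A^T B).\<close>

definition gradient :: "('a::real_inner \<Rightarrow> real) \<Rightarrow> 'a \<Rightarrow> 'a" where
  "gradient f x = (THE g. (f has_derivative (\<lambda>v. g \<bullet> v)) (at x))"

definition psd :: "real^'n^'n \<Rightarrow> bool" where
  "psd A \<longleftrightarrow> transpose A = A \<and> (\<forall>x. 0 \<le> x \<bullet> (A *v x))"

definition lambda_min :: "real^'n^'n \<Rightarrow> real" where
  "lambda_min A = Min {l. \<exists>v. v \<noteq> 0 \<and> A *v v = l *\<^sub>R v}"

definition msqrt :: "real^'n^'n \<Rightarrow> real^'n^'n" where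
  "msqrt A = (THE S. psd S \<and> S ** S = A)"

definition local_norm :: "real^'r^'n \<Rightarrow> real \<Rightarrow> real^'r^'n \<Rightarrow> real" where
  "local_norm X eta V = norm (V ** msqrt (transpose X ** X + eta *\<^sub>R mat 1))"

end

theory Submission
  imports Defs
begin

lemma sym_inner:
  fixes A :: "real^'n^'n"
  assumes "transpose A = A"
  shows "x \<bullet> (A *v y) = (A *v x) \<bullet> y"
  by (metis assms dot_lmul_matrix transpose_matrix_vector)

lemma quad_zero:
  fixes a b :: real
  assumes "\<And>t. 0 \<le> 2 * t * a + t\<^sup>2 * b"
  shows "a = 0"
proof (rule ccontr)
  assume "a \<noteq> 0"
  define c where "c = \<bar>b\<bar> + 1"
  have c: "c > 0" "\<bar>b\<bar> \<le> c" "c \<ge> 1" unfolding c_def by auto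
  define t where "t = - a / c"
  have "t\<^sup>2 * b \<le> t\<^sup>2 * c" using c by (intro mult_left_mono) auto
  also have "t\<^sup>2 * c = a\<^sup>2 / c" unfolding t_def using c by (simp add: power2_eq_square field_simps)
  finally have 1: "t\<^sup>2 * b \<le> a\<^sup>2 / c" .
  have 2: "2 * t * a = - 2 * (a\<^sup>2 / c)" unfolding t_def using c by (simp add: power2_eq_square field_simps)
  moreover have "a\<^sup>2 / c > 0" using \<open>a \<noteq> 0\<close> c by simp
  ultimately show False using assms[of t] 1 2 by linarith
qed

lemma spectral_sub:
  fixes A :: "real^'n^'n"
  assumes sym: "transpose A = A"
  shows "subspace W \<Longrightarrow> (\<forall>x\<in>W. A *v x \<in> W) \<Longrightarrow>
    \<exists>B. B \<subseteq> W \<and> finite B \<and> pairwise orthogonal B \<and>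
      (\<forall>b\<in>B. norm b = 1 \<and> A *v b = (b \<bullet> (A *v b)) *\<^sub>R b) \<and> W \<subseteq> span B"
proof (induction "dim W" arbitrary: W rule: less_induct)
  case less
  note sub = less.prems(1) and inv = less.prems(2)
  show ?case
  proof (cases "W \<subseteq> {0}")
    case True
    then show ?thesis by (intro exI[of _ "{}"]) auto
  next
    case False
    then obtain w where w: "w \<in> W" "w \<noteq> 0" by auto
    define K where "K = W \<inter> sphere 0 1"
    have "w /\<^sub>R norm w \<in> K" using w sub unfolding K_def by (auto simp: subspace_scale)
    hence Kne: "K \<noteq> {}" by auto
    have Kc: "compact K" unfolding K_def
      using compact_Int_closed[OF compact_sphere closed_subspace[OF sub]] by (simp add: Int_commute)
    have cont: "continuous_on K (\<lambda>x. x \<bullet> (A *v x))"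
      by (intro continuous_intros linear_continuous_on matrix_vector_mul_linear[THEN linear_conv_bounded_linear[THEN iffD1]])
    obtain u where u: "u \<in> K" and umin: "\<And>y. y \<in> K \<Longrightarrow> u \<bullet> (A *v u) \<le> y \<bullet> (A *v y)"
      using continuous_attains_inf[OF Kc Kne cont] by blast
    define mu where "mu = u \<bullet> (A *v u)"
    have uW: "u \<in> W" and un: "norm u = 1" using u unfolding K_def by auto
    have uu: "u \<bullet> u = 1" using un by (simp add: norm_eq_1)
    have ray: "mu * (x \<bullet> x) \<le> x \<bullet> (A *v x)" if "x \<in> W" for x
    proof (cases "x = 0")
      case True then show ?thesis by simp
    next
      case False
      define y where "y = x /\<^sub>R norm x"
      have "y \<in> K" using that False sub unfolding K_def y_def by (auto simp: subspace_scale)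
      hence "mu \<le> y \<bullet> (A *v y)" using umin mu_def by auto
      also have "y \<bullet> (A *v y) = (x \<bullet> (A *v x)) / (norm x)\<^sup>2"
        unfolding y_def by (simp add: matrix_vector_mult_scaleR power2_eq_square field_simps)
      finally show ?thesis using False by (simp add: field_simps power2_norm_eq_inner)
    qed
    have eig: "A *v u = mu *\<^sub>R u"
    proof -
      have key: "w \<bullet> (A *v u - mu *\<^sub>R u) = 0" if wW: "w \<in> W" for w
      proof (rule quad_zero)
        fix t :: real
        have "u + t *\<^sub>R w \<in> W" using uW wW sub by (simp add: subspace_add subspace_scale)
        hence "mu * ((u + t *\<^sub>R w) \<bullet> (u + t *\<^sub>R w)) \<le> (u + t *\<^sub>R w) \<bullet> (A *v (u + t *\<^sub>R w))"
          by (rule ray)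
        moreover have "u \<bullet> (A *v w) = w \<bullet> (A *v u)"
          using sym_inner[OF sym, of u w] by (simp add: inner_commute)
        ultimately show "0 \<le> 2 * t * (w \<bullet> (A *v u - mu *\<^sub>R u)) + t\<^sup>2 * (w \<bullet> (A *v w) - mu * (w \<bullet> w))"
          by (simp add: algebra_simps inner_add_left inner_add_right matrix_vector_right_distrib
             matrix_vector_mult_scaleR power2_eq_square uu mu_def[symmetric] inner_commute[of w u])
      qed
      have "A *v u - mu *\<^sub>R u \<in> W" using inv uW sub by (simp add: subspace_diff subspace_scale)
      from key[OF this] show ?thesis by simp
    qed
    define W' where "W' = {x \<in> W. u \<bullet> x = 0}"
    have sub': "subspace W'" using sub unfolding W'_def subspace_def
      by (auto simp: inner_add_right)
    have inv': "\<forall>x\<in>W'. A *v x \<in> W'"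
    proof
      fix x assume x: "x \<in> W'"
      have "u \<bullet> (A *v x) = (A *v u) \<bullet> x" by (rule sym_inner[OF sym])
      also have "\<dots> = 0" using x eig unfolding W'_def by simp
      finally show "A *v x \<in> W'" using x inv unfolding W'_def by auto
    qed
    have "W' \<subset> W" using uW uu unfolding W'_def by (metis (mono_tags, lifting) mem_Collect_eq psubsetI subsetI zero_neq_one)
    hence "dim W' < dim W"
      by (metis dim_psubset span_eq_iff sub sub')
    from less.hyps[OF this sub' inv'] obtain B' where B':
      "B' \<subseteq> W'" "finite B'" "pairwise orthogonal B'"
      "\<forall>b\<in>B'. norm b = 1 \<and> A *v b = (b \<bullet> (A *v b)) *\<^sub>R b" "W' \<subseteq> span B'" by blast
    show ?thesis
    proof (intro exI[of _ "insert u B'"] conjI)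
      show "insert u B' \<subseteq> W" using B'(1) uW unfolding W'_def by auto
      show "finite (insert u B')" using B'(2) by simp
      show "pairwise orthogonal (insert u B')"
        using B'(3) B'(1) unfolding pairwise_insert W'_def orthogonal_def
        by (auto simp: inner_commute)
      show "\<forall>b\<in>insert u B'. norm b = 1 \<and> A *v b = (b \<bullet> (A *v b)) *\<^sub>R b"
        using B'(4) un eig mu_def by auto
      show "W \<subseteq> span (insert u B')"
      proof
        fix x assume x: "x \<in> W"
        have "x - (u \<bullet> x) *\<^sub>R u \<in> W'" unfolding W'_def
          using x uW sub uu by (simp add: subspace_diff subspace_scale inner_diff_right)
        hence "x - (u \<bullet> x) *\<^sub>R u \<in> span (insert u B')" using B'(5)
          by (meson in_mono span_mono subset_insertI)
        moreover have "(u \<bullet> x) *\<^sub>R u \<in> span (insert u B')" by (simp add: span_base span_scale)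
        ultimately show "x \<in> span (insert u B')"
          by (metis diff_add_cancel span_add)
      qed
    qed
  qed
qed

definition eig_onb :: "real^'n^'n \<Rightarrow> (real^'n) set \<Rightarrow> bool" where
  "eig_onb A B \<longleftrightarrow> transpose A = A \<and> finite B \<and> (\<forall>b\<in>B. \<forall>c\<in>B. b \<bullet> c = (if b = c then 1 else 0)) \<and>
     (\<forall>b\<in>B. A *v b = (b \<bullet> (A *v b)) *\<^sub>R b) \<and> (\<forall>x. x = (\<Sum>b\<in>B. (x \<bullet> b) *\<^sub>R b))"

lemma eig_onbD:
  assumes "eig_onb A B"
  shows "transpose A = A" "finite B" "\<forall>b\<in>B. \<forall>c\<in>B. b \<bullet> c = (if b = c then 1 else 0)"
    "\<forall>b\<in>B. A *v b = (b \<bullet> (A *v b)) *\<^sub>R b" "\<forall>x. x = (\<Sum>b\<in>B. (x \<bullet> b) *\<^sub>R b)"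
  using assms unfolding eig_onb_def by argo+

lemma spectral:
  fixes A :: "real^'n^'n"
  assumes sym: "transpose A = A"
  shows "\<exists>B. eig_onb A B"
proof -
  have "\<exists>B. B \<subseteq> UNIV \<and> finite B \<and> pairwise orthogonal B \<and>
      (\<forall>b\<in>B. norm b = 1 \<and> A *v b = (b \<bullet> (A *v b)) *\<^sub>R b) \<and> UNIV \<subseteq> span B"
    by (rule spectral_sub[OF sym]) (simp_all add: subspace_UNIV)
  then obtain B where B: "finite B" "pairwise orthogonal B"
      "\<forall>b\<in>B. norm b = 1" "\<forall>b\<in>B. A *v b = (b \<bullet> (A *v b)) *\<^sub>R b" "UNIV \<subseteq> span B"
    by blast
  have "b \<bullet> c = (if b = c then 1 else 0)" if "b \<in> B" "c \<in> B" for b c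
  proof (cases "b = c")
    case True thus ?thesis using B(3) that by (simp add: norm_eq_1)
  next
    case False thus ?thesis using B(2) that unfolding pairwise_def orthogonal_def by simp
  qed
  moreover have "x = (\<Sum>b\<in>B. (x \<bullet> b) *\<^sub>R b)" for x
  proof -
    have "x \<in> span B" using B(5) by blast
    from orthonormal_basis_expand[OF B(2) _ this B(1)] B(3) show ?thesis by metis
  qed
  ultimately show ?thesis unfolding eig_onb_def using B(1,4) sym by blast
qed

lemma mv_sum: "(A::real^'n^'m) *v (\<Sum>b\<in>B. f b) = (\<Sum>b\<in>B. A *v f b)"
  by (simp add: linear_sum[OF matrix_vector_mul_linear] o_def)

lemma eig_onb_quad:
  assumes "eig_onb A B"
  shows "x \<bullet> (A *v x) = (\<Sum>b\<in>B. (b \<bullet> (A *v b)) * (x \<bullet> b)\<^sup>2)"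
    and "x \<bullet> x = (\<Sum>b\<in>B. (x \<bullet> b)\<^sup>2)"
proof -
  have ex: "x = (\<Sum>b\<in>B. (x \<bullet> b) *\<^sub>R b)" using eig_onbD(5)[OF assms] by (rule spec)
  have eg: "\<forall>b\<in>B. A *v b = (b \<bullet> (A *v b)) *\<^sub>R b" by (rule eig_onbD(4)[OF assms])
  have "x \<bullet> (A *v x) = x \<bullet> (\<Sum>b\<in>B. (x \<bullet> b) *\<^sub>R (A *v b))"
    by (subst ex) (simp add: mv_sum matrix_vector_mult_scaleR)
  also have "\<dots> = (\<Sum>b\<in>B. (b \<bullet> (A *v b)) * (x \<bullet> b)\<^sup>2)"
    unfolding inner_sum_right
  proof (rule sum.cong[OF refl])
    fix b assume b: "b \<in> B"
    have e: "A *v b = (b \<bullet> (A *v b)) *\<^sub>R b" using eg b by blast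
    have "x \<bullet> (A *v b) = (b \<bullet> (A *v b)) * (x \<bullet> b)"
      using arg_cong[OF e, of "\<lambda>y. x \<bullet> y"] by simp
    thus "x \<bullet> ((x \<bullet> b) *\<^sub>R (A *v b)) = (b \<bullet> (A *v b)) * (x \<bullet> b)\<^sup>2"
      by (simp add: power2_eq_square)
  qed
  finally show "x \<bullet> (A *v x) = (\<Sum>b\<in>B. (b \<bullet> (A *v b)) * (x \<bullet> b)\<^sup>2)" .
  have "x \<bullet> x = x \<bullet> (\<Sum>b\<in>B. (x \<bullet> b) *\<^sub>R b)" by (subst ex) simp
  also have "\<dots> = (\<Sum>b\<in>B. (x \<bullet> b)\<^sup>2)"
    by (simp add: inner_sum_right power2_eq_square)
  finally show "x \<bullet> x = (\<Sum>b\<in>B. (x \<bullet> b)\<^sup>2)" .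
qed

lemma lambda_min_le:
  assumes "eig_onb A B"
  shows "lambda_min A * (x \<bullet> x) \<le> x \<bullet> (A *v x)"
proof -
  define S where "S = {l. \<exists>v. v \<noteq> 0 \<and> A *v v = l *\<^sub>R v}"
  have fin: "finite B" and on: "\<forall>b\<in>B. \<forall>c\<in>B. b \<bullet> c = (if b = c then 1 else 0)"
    and eg: "\<forall>b\<in>B. A *v b = (b \<bullet> (A *v b)) *\<^sub>R b" and ex: "\<forall>x. x = (\<Sum>b\<in>B. (x \<bullet> b) *\<^sub>R b)"
    using eig_onbD[OF assms] by argo+
  have "S \<subseteq> (\<lambda>b. b \<bullet> (A *v b)) ` B"
  proof
    fix l assume "l \<in> S"
    then obtain v where v: "v \<noteq> 0" "A *v v = l *\<^sub>R v" unfolding S_def by auto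
    have "\<exists>b\<in>B. v \<bullet> b \<noteq> 0"
    proof (rule ccontr)
      assume "\<not> (\<exists>b\<in>B. v \<bullet> b \<noteq> 0)"
      hence "\<forall>b\<in>B. v \<bullet> b = 0" by blast
      hence "(\<Sum>b\<in>B. (v \<bullet> b) *\<^sub>R b) = 0" by simp
      hence "v = 0" using ex[rule_format, of v] by metis
      thus False using v by simp
    qed
    then obtain b where b: "b \<in> B" "v \<bullet> b \<noteq> 0" by blast
    have sy: "transpose A = A" using eig_onbD[OF assms] by argo+
    have "b \<bullet> (A *v v) = l * (b \<bullet> v)" using v by simp
    moreover have "b \<bullet> (A *v v) = (A *v b) \<bullet> v"
      by (rule sym_inner[OF sy])
    moreover have "(A *v b) \<bullet> v = (b \<bullet> (A *v b)) * (b \<bullet> v)"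
    proof -
      have e: "A *v b = (b \<bullet> (A *v b)) *\<^sub>R b" using eg b by blast
      show ?thesis using arg_cong[OF e, of "\<lambda>y. y \<bullet> v"] by simp
    qed
    ultimately have "l * (b \<bullet> v) = (b \<bullet> (A *v b)) * (b \<bullet> v)" by linarith
    moreover have "b \<bullet> v \<noteq> 0" using b(2) by (metis inner_commute)
    ultimately have "l = b \<bullet> (A *v b)" by simp
    thus "l \<in> (\<lambda>b. b \<bullet> (A *v b)) ` B" using b by auto
  qed
  hence finS: "finite S" using fin finite_surj by blast
  have inS: "b \<bullet> (A *v b) \<in> S" if "b \<in> B" for b
  proof -
    have "b \<noteq> 0" using on that by force
    moreover have "A *v b = (b \<bullet> (A *v b)) *\<^sub>R b" using eg that by blast
    ultimately show ?thesis unfolding S_def by blast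
  qed
  have "lambda_min A * (x \<bullet> x) = (\<Sum>b\<in>B. Min S * (x \<bullet> b)\<^sup>2)"
    unfolding lambda_min_def S_def[symmetric] eig_onb_quad(2)[OF assms, of x] by (simp add: sum_distrib_left)
  also have "\<dots> \<le> (\<Sum>b\<in>B. (b \<bullet> (A *v b)) * (x \<bullet> b)\<^sup>2)"
    by (intro sum_mono mult_right_mono Min_le finS inS) auto
  also have "\<dots> = x \<bullet> (A *v x)" by (rule eig_onb_quad(1)[OF assms, of x, symmetric])
  finally show ?thesis .
qed

lemma sym_from_inner:
  fixes S :: "real^'n^'n"
  assumes "\<And>x y. x \<bullet> (S *v y) = (S *v x) \<bullet> y"
  shows "transpose S = S"
proof -
  have "transpose S *v x = S *v x" for x
  proof -
    have "\<forall>y. (transpose S *v x) \<bullet> y = (S *v x) \<bullet> y"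
      using assms by (simp add: dot_lmul_matrix)
    thus ?thesis using vector_eq_rdot by blast
  qed
  thus ?thesis by (simp add: matrix_eq)
qed

lemma S0v_gen:
  fixes B :: "(real^'n) set"
  shows "(\<chi> i j. \<Sum>b\<in>B. c b * b$i * b$j) *v x = (\<Sum>b\<in>B. (c b * (b \<bullet> x)) *\<^sub>R b)"
proof -
  have "((\<chi> i j. \<Sum>b\<in>B. c b * b$i * b$j) *v x)$i = (\<Sum>b\<in>B. (c b * (b \<bullet> x)) *\<^sub>R b)$i" for i
  proof -
    have "((\<chi> i j. \<Sum>b\<in>B. c b * b$i * b$j) *v x)$i = (\<Sum>j\<in>UNIV. \<Sum>b\<in>B. c b * b$i * b$j * x$j)"
      by (simp add: matrix_vector_mult_def sum_distrib_right)
    also have "\<dots> = (\<Sum>b\<in>B. \<Sum>j\<in>UNIV. c b * b$i * b$j * x$j)" by (rule sum.swap)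
    also have "\<dots> = (\<Sum>b\<in>B. (c b * (b \<bullet> x)) * b$i)"
      by (simp add: inner_vec_def sum_distrib_left mult_ac)
    also have "\<dots> = (\<Sum>b\<in>B. (c b * (b \<bullet> x)) *\<^sub>R b)$i" by (simp add: sum_component)
    finally show ?thesis .
  qed
  thus ?thesis by (simp add: vec_eq_iff)
qed

lemma msqrt_props:
  fixes H :: "real^'n^'n"
  assumes eo: "eig_onb H B" and nn: "\<forall>b\<in>B. 0 \<le> b \<bullet> (H *v b)"
  shows "psd (msqrt H) \<and> msqrt H ** msqrt H = H"
proof -
  have sy: "transpose H = H" and fin: "finite B" and on: "\<forall>b\<in>B. \<forall>c\<in>B. b \<bullet> c = (if b = c then 1 else 0)"
    and eg: "\<forall>b\<in>B. H *v b = (b \<bullet> (H *v b)) *\<^sub>R b" and ex: "\<forall>x. x = (\<Sum>b\<in>B. (x \<bullet> b) *\<^sub>R b)"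
    using eig_onbD[OF eo] by argo+
  define c where "c b = sqrt (b \<bullet> (H *v b))" for b
  have c2: "c b * c b = b \<bullet> (H *v b)" "c b \<ge> 0" if "b \<in> B" for b
    unfolding c_def using nn that by auto
  define S0 :: "real^'n^'n" where "S0 = (\<chi> i j. \<Sum>b\<in>B. c b * b$i * b$j)"
  have S0v: "S0 *v x = (\<Sum>b\<in>B. (c b * (b \<bullet> x)) *\<^sub>R b)" for x
    unfolding S0_def by (rule S0v_gen)
  have S0b: "S0 *v b' = c b' *\<^sub>R b'" if "b' \<in> B" for b'
  proof -
    have "S0 *v b' = (\<Sum>b\<in>B. if b = b' then c b' *\<^sub>R b' else 0)"
      unfolding S0v using on that by (intro sum.cong) auto
    also have "\<dots> = c b' *\<^sub>R b'" using fin that by (simp add: sum.delta)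
    finally show ?thesis .
  qed
  have expand: "M *v x = (\<Sum>b\<in>B. (x \<bullet> b) *\<^sub>R (M *v b))" for M :: "real^'n^'n" and x
  proof -
    have "M *v x = M *v (\<Sum>b\<in>B. (x \<bullet> b) *\<^sub>R b)" using ex by metis
    thus ?thesis by (simp add: mv_sum matrix_vector_mult_scaleR)
  qed
  have S0sym: "transpose S0 = S0"
    by (rule sym_from_inner) (simp add: S0v inner_sum_left inner_sum_right mult_ac inner_commute)
  have S0psd: "psd S0" unfolding psd_def
  proof (intro conjI allI S0sym)
    fix x
    have "x \<bullet> (S0 *v x) = (\<Sum>b\<in>B. c b * (b \<bullet> x)\<^sup>2)"
      by (simp add: S0v inner_sum_right power2_eq_square mult_ac inner_commute)
    also have "\<dots> \<ge> 0" using c2 by (intro sum_nonneg) auto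
    finally show "0 \<le> x \<bullet> (S0 *v x)" .
  qed
  have Hb: "H *v b = (c b * c b) *\<^sub>R b" if "b \<in> B" for b
    unfolding c2(1)[OF that] using eg that by blast
  have S0sq: "S0 ** S0 = H"
  proof -
    have "(S0 ** S0) *v b = H *v b" if "b \<in> B" for b
    proof -
      have "(S0 ** S0) *v b = S0 *v (S0 *v b)" by (simp add: matrix_vector_mul_assoc)
      also have "\<dots> = (c b * c b) *\<^sub>R b" using that by (simp add: S0b matrix_vector_mult_scaleR)
      also have "\<dots> = H *v b" using Hb[OF that] by simp
      finally show ?thesis .
    qed
    hence "(S0 ** S0) *v x = H *v x" for x
      using expand[of "S0 ** S0" x] expand[of H x] by (metis (no_types, lifting) sum.cong)
    thus ?thesis by (simp add: matrix_eq)
  qed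
  have uniq: "S = S0" if S: "psd S" "S ** S = H" for S
  proof -
    have Ssym: "transpose S = S" and Spos: "\<And>x. 0 \<le> x \<bullet> (S *v x)" using S(1) unfolding psd_def by auto
    have SSv: "S *v (S *v x) = H *v x" for x using S(2) by (simp add: matrix_vector_mul_assoc)
    have Sb: "S *v b = c b *\<^sub>R b" if b: "b \<in> B" for b
    proof (cases "c b = 0")
      case True
      have "(S *v b) \<bullet> (S *v b) = b \<bullet> (S *v (S *v b))" using sym_inner[OF Ssym] by simp
      also have "\<dots> = 0" by (simp add: SSv Hb[OF b] True)
      finally show ?thesis using True by simp
    next
      case False
      hence cpos: "c b > 0" using c2[OF b] by simp
      define w where "w = S *v b - c b *\<^sub>R b"
      have "S *v w = - c b *\<^sub>R w"
      proof -
        have "S *v w = H *v b - c b *\<^sub>R (S *v b)"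
          unfolding w_def by (simp add: matrix_vector_mult_diff_distrib matrix_vector_mult_scaleR SSv)
        also have "H *v b = (c b * c b) *\<^sub>R b" by (rule Hb[OF b])
        finally show ?thesis unfolding w_def by (simp add: algebra_simps)
      qed
      hence "w \<bullet> (S *v w) = - c b * (w \<bullet> w)" by simp
      hence "- c b * (w \<bullet> w) \<ge> 0" using Spos by metis
      hence "w \<bullet> w \<le> 0" using cpos by (simp add: mult_le_0_iff)
      hence "w = 0" by (metis inner_eq_zero_iff inner_ge_zero order_antisym)
      thus ?thesis unfolding w_def by simp
    qed
    have "S *v x = S0 *v x" for x
      using expand[of S x] expand[of S0 x] Sb S0b by (metis (no_types, lifting) sum.cong)
    thus ?thesis by (simp add: matrix_eq)
  qed
  have "msqrt H = S0" unfolding msqrt_def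
    using uniq S0psd S0sq by blast
  thus ?thesis using S0psd S0sq by simp
qed

lemma grad_deriv:
  fixes f :: "'a::euclidean_space \<Rightarrow> real"
  assumes d: "(f has_derivative D) (at x)"
  shows "(f has_derivative (\<lambda>v. gradient f x \<bullet> v)) (at x)" and "gradient f x \<bullet> v = D v"
proof -
  have lin: "linear D" using d by (rule has_derivative_linear)
  define g where "g = (\<Sum>b\<in>Basis. D b *\<^sub>R b)"
  have gv: "g \<bullet> v = D v" for v
  proof -
    have "g \<bullet> v = (\<Sum>b\<in>Basis. (v \<bullet> b) * D b)" unfolding g_def inner_sum_left by (simp add: inner_commute mult.commute)
    also have "\<dots> = D (\<Sum>b\<in>Basis. (v \<bullet> b) *\<^sub>R b)"
      by (simp add: linear_sum[OF lin] linear_scale[OF lin] o_def)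
    also have "\<dots> = D v" by (simp add: euclidean_representation)
    finally show ?thesis .
  qed
  have dg: "(f has_derivative (\<lambda>v. g \<bullet> v)) (at x)" using d gv by (simp add: fun_eq_iff[symmetric])
  have "gradient f x = g" unfolding gradient_def
  proof (rule the_equality)
    show "(f has_derivative (\<lambda>v. g \<bullet> v)) (at x)" by (rule dg)
  next
    fix g' assume "(f has_derivative (\<lambda>v. g' \<bullet> v)) (at x)"
    hence "(\<lambda>v. g' \<bullet> v) = (\<lambda>v. g \<bullet> v)" using dg has_derivative_unique by blast
    thus "g' = g" by (metis vector_eq_ldot inner_commute)
  qed
  thus "(f has_derivative (\<lambda>v. gradient f x \<bullet> v)) (at x)" and "gradient f x \<bullet> v = D v"
    using dg gv by auto
qed

lemma grad_deriv':
  fixes f :: "'a::euclidean_space \<Rightarrow> real"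
  assumes "f differentiable (at x)"
  shows "(f has_derivative (\<lambda>v. gradient f x \<bullet> v)) (at x)"
  using assms grad_deriv(1) unfolding differentiable_def by blast

lemma descent:
  fixes phi :: "'a::euclidean_space \<Rightarrow> real"
  assumes diff: "\<forall>M. phi differentiable (at M)"
    and lip: "\<forall>M E. norm (gradient phi (M + E) - gradient phi M) \<le> L * norm E"
  shows "phi (M + E) \<le> phi M + gradient phi M \<bullet> E + L / 2 * (norm E)\<^sup>2"
proof -
  define G where "G = gradient phi M"
  define h where "h t = phi (M + t *\<^sub>R E) - t * (G \<bullet> E) - L / 2 * t\<^sup>2 * (norm E)\<^sup>2" for t
  define h' where "h' t = (gradient phi (M + t *\<^sub>R E) - G) \<bullet> E - L * t * (norm E)\<^sup>2" for t
  have dh: "(h has_derivative (\<lambda>s. s * h' t)) (at t within {0..1})" for t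
  proof -
    have l: "((\<lambda>t. M + t *\<^sub>R E) has_derivative (\<lambda>s. s *\<^sub>R E)) (at t within {0..1})"
      by (auto intro!: derivative_eq_intros)
    have p: "((\<lambda>t. phi (M + t *\<^sub>R E)) has_derivative (\<lambda>s. gradient phi (M + t *\<^sub>R E) \<bullet> (s *\<^sub>R E))) (at t within {0..1})"
      by (rule has_derivative_compose[OF l grad_deriv'[OF diff[rule_format]]])
    have p': "((\<lambda>t. phi (M + t *\<^sub>R E)) has_derivative (\<lambda>s. s * (gradient phi (M + t *\<^sub>R E) \<bullet> E))) (at t within {0..1})"
      using p by (rule has_derivative_eq_rhs) (simp add: fun_eq_iff)
    have d2: "((\<lambda>t. t * (G \<bullet> E)) has_derivative (\<lambda>s. s * (G \<bullet> E))) (at t within {0..1})"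
      by (auto intro!: derivative_eq_intros)
    have "((\<lambda>t. L / 2 * t\<^sup>2 * (norm E)\<^sup>2) has_field_derivative (L * t * (norm E)\<^sup>2)) (at t within {0..1})"
      by (auto intro!: derivative_eq_intros)
    hence d3: "((\<lambda>t. L / 2 * t\<^sup>2 * (norm E)\<^sup>2) has_derivative (\<lambda>s. s * (L * t * (norm E)\<^sup>2))) (at t within {0..1})"
      unfolding has_field_derivative_def by (rule has_derivative_eq_rhs) (simp add: fun_eq_iff mult.commute)
    show ?thesis unfolding h_def h'_def
      by (rule has_derivative_eq_rhs[OF has_derivative_diff[OF has_derivative_diff[OF p' d2] d3]])
        (simp add: fun_eq_iff algebra_simps inner_diff_left)
  qed
  obtain t where t: "t \<in> {0<..<1}" "h 1 - h 0 = 1 * h' t"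
    using mvt_simple[of 0 1 h "\<lambda>t s. s * h' t"] dh by auto
  have "(gradient phi (M + t *\<^sub>R E) - G) \<bullet> E \<le> norm (gradient phi (M + t *\<^sub>R E) - G) * norm E"
    by (rule norm_cauchy_schwarz)
  also have "\<dots> \<le> (L * norm (t *\<^sub>R E)) * norm E"
    unfolding G_def by (intro mult_right_mono lip[rule_format]) auto
  also have "\<dots> = L * t * (norm E)\<^sup>2" using t by (simp add: power2_eq_square)
  finally have "h' t \<le> 0" unfolding h'_def by simp
  hence "h 1 \<le> h 0" using t by simp
  thus ?thesis unfolding h_def G_def by simp
qed

lemma row_mult: "(A ** B) $ i = A $ i v* (B::real^'c^'b)"
  by (simp add: matrix_matrix_mult_def vector_matrix_mult_def vec_eq_iff mult.commute)

lemma norm_sq_rows: "(norm (A::real^'a^'b))\<^sup>2 = (\<Sum>i\<in>UNIV. (norm (A$i))\<^sup>2)"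
  by (simp add: power2_norm_eq_inner inner_vec_def)

lemma norm_transpose: "norm (transpose (A::real^'a^'b)) = norm A"
proof -
  have "(norm (transpose A))\<^sup>2 = (\<Sum>i\<in>UNIV. \<Sum>j\<in>UNIV. A$j$i * A$j$i)"
    unfolding norm_sq_rows power2_norm_eq_inner inner_vec_def by (simp add: transpose_def)
  also have "\<dots> = (\<Sum>j\<in>UNIV. \<Sum>i\<in>UNIV. A$j$i * A$j$i)" by (rule sum.swap)
  also have "\<dots> = (norm A)\<^sup>2"
    unfolding norm_sq_rows power2_norm_eq_inner inner_vec_def by simp
  finally show ?thesis by (simp add: power2_eq_iff_nonneg)
qed

lemma norm_VVt: "norm (V ** transpose (V::real^'a^'b)) \<le> (norm V)\<^sup>2"
proof -
  have e: "(V ** transpose V) $ i $ j = V$i \<bullet> V$j" for i j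
    by (simp add: matrix_matrix_mult_def transpose_def inner_vec_def)
  have r: "(norm ((V ** transpose V)$i))\<^sup>2 = (\<Sum>j\<in>UNIV. (V$i \<bullet> V$j)\<^sup>2)" for i
    unfolding power2_norm_eq_inner inner_vec_def[of "(V ** transpose V)$i"] e by (simp add: power2_eq_square)
  have "(norm (V ** transpose V))\<^sup>2 = (\<Sum>i\<in>UNIV. \<Sum>j\<in>UNIV. (V$i \<bullet> V$j)\<^sup>2)"
    unfolding norm_sq_rows r ..
  also have "\<dots> \<le> (\<Sum>i\<in>UNIV. \<Sum>j\<in>UNIV. (norm (V$i))\<^sup>2 * (norm (V$j))\<^sup>2)"
  proof (intro sum_mono)
    fix i j
    have "\<bar>V$i \<bullet> V$j\<bar> \<le> norm (V$i) * norm (V$j)" by (rule Cauchy_Schwarz_ineq2)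
    hence "(V$i \<bullet> V$j)\<^sup>2 \<le> (norm (V$i) * norm (V$j))\<^sup>2"
      by (metis abs_ge_zero power2_abs power_mono)
    thus "(V$i \<bullet> V$j)\<^sup>2 \<le> (norm (V$i))\<^sup>2 * (norm (V$j))\<^sup>2" by (simp add: power_mult_distrib)
  qed
  also have "\<dots> = ((norm V)\<^sup>2)\<^sup>2"
    unfolding norm_sq_rows by (metis (no_types) power2_eq_square sum_product)
  finally show ?thesis
    by (metis abs_norm_cancel norm_ge_zero power2_le_imp_le zero_le_power2 abs_of_nonneg)
qed

lemma lin_mult_l: "linear (\<lambda>B::real^'l^'k. (A::real^'k^'m) ** B)"
  by (rule linearI) (simp_all add: matrix_add_ldistrib matrix_scalar_ac scalar_matrix_assoc)

lemma lin_mult_r: "linear (\<lambda>A::real^'k^'m. A ** (B::real^'l^'k))"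
  by (rule linearI) (simp_all add: scalar_matrix_assoc[symmetric] matrix_matrix_mult_def vec_eq_iff sum.distrib distrib_right sum_distrib_left mult.assoc)

lemma bb_mult: "bounded_bilinear (\<lambda>(A::real^'k^'m) (B::real^'l^'k). A ** B)"
proof -
  have "bilinear (\<lambda>(A::real^'k^'m) (B::real^'l^'k). A ** B)"
    unfolding bilinear_def using lin_mult_l lin_mult_r by blast
  thus ?thesis by (simp add: bilinear_conv_bounded_bilinear)
qed

lemma d_sq: "((\<lambda>Y::real^'r^'n. Y ** transpose Y) has_derivative (\<lambda>h. Y ** transpose h + h ** transpose Y)) (at Y)"
proof -
  have lt: "linear (transpose :: real^'r^'n \<Rightarrow> real^'n^'r)"
    by (rule linearI) (simp_all add: transpose_def vec_eq_iff)
  have dt: "(transpose has_derivative transpose) (at Y)"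
    using lt by (simp add: linear_conv_bounded_linear bounded_linear_imp_has_derivative)
  show ?thesis
    using bounded_bilinear.FDERIV[OF bb_mult has_derivative_id dt] by simp
qed
lemma XAX_lem: "x \<bullet> ((transpose X ** X) *v x) = (X *v x) \<bullet> ((X::real^'r^'n) *v x)"
proof -
  have "(transpose X ** X) *v x = transpose X *v (X *v x)" by (simp add: matrix_vector_mul_assoc)
  also have "\<dots> = (X *v x) v* X" by simp
  finally have "x \<bullet> ((transpose X ** X) *v x) = x \<bullet> ((X *v x) v* X)" by simp
  also have "\<dots> = ((X *v x) v* X) \<bullet> x" by (rule inner_commute)
  also have "\<dots> = (X *v x) \<bullet> (X *v x)" by (rule dot_lmul_matrix)
  finally show ?thesis .
qed
lemma Hv_lem: "((A::real^'n^'n) + eta *\<^sub>R mat 1) *v x = A *v x + eta *\<^sub>R x"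
  by (simp add: matrix_vector_mult_add_rdistrib scaleR_matrix_vector_assoc[symmetric])

theorem lemma22:
  fixes phi :: "real^'n^'n \<Rightarrow> real" and L eta :: real
    and Mstar :: "real^'n^'n" and X V :: "real^'r^'n"
  assumes diff: "\<forall>M. phi differentiable (at M)"
    and lip: "\<forall>M E. norm (gradient phi (M + E) - gradient phi M) \<le> L * norm E"
    and argmin: "\<forall>M. phi Mstar \<le> phi M"
    and psd_star: "psd Mstar"
    and eta: "eta \<ge> 0"
    and pos: "lambda_min (transpose X ** X) + eta > 0"
  shows "let f = (\<lambda>Y::real^'r^'n. phi (Y ** transpose Y));
             lam = lambda_min (transpose X ** X) + eta;
             nv = local_norm X eta V;
             ell = L * (4 + (2 * norm (X ** transpose X - Mstar) + 4 * nv) / lam + (nv / lam)\<^sup>2)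
         in f (X + V) \<le> f X + gradient f X \<bullet> V + ell / 2 * nv\<^sup>2"
proof -
  define f where "f = (\<lambda>Y::real^'r^'n. phi (Y ** transpose Y))"
  define A where "A = transpose X ** X"
  define H where "H = A + eta *\<^sub>R mat 1"
  define lam where "lam = lambda_min A + eta"
  define S where "S = msqrt H"
  define nv where "nv = local_norm X eta V"
  define M where "M = X ** transpose X"
  define G where "G = gradient phi M"
  define D where "D = norm (M - Mstar)"
  have lampos: "lam > 0" using pos unfolding lam_def A_def .
  have nvS: "nv = norm (V ** S)" unfolding nv_def local_norm_def S_def H_def A_def ..
  have Asym: "transpose A = A" unfolding A_def by (simp add: matrix_transpose_mul)
  obtain B where BA: "eig_onb A B" using spectral[OF Asym] by blast
  have Hv: "H *v x = A *v x + eta *\<^sub>R x" for x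
    unfolding H_def by (rule Hv_lem)
  have XAX: "x \<bullet> (A *v x) = (X *v x) \<bullet> (X *v x)" for x
    unfolding A_def by (rule XAX_lem)
  have BH: "eig_onb H B"
  proof -
    have Hs: "transpose H = H" unfolding H_def using Asym
      by (simp add: transpose_scalar vec_eq_iff transpose_def mat_def)
    have He: "\<forall>b\<in>B. H *v b = (b \<bullet> (H *v b)) *\<^sub>R b"
    proof
      fix b assume b: "b \<in> B"
      obtain l where e: "A *v b = l *\<^sub>R b" using eig_onbD(4)[OF BA] b by blast
      have bb: "b \<bullet> b = 1" using eig_onbD(3)[OF BA] b by auto
      have "H *v b = (l + eta) *\<^sub>R b" unfolding Hv e by (simp add: algebra_simps)
      moreover have "b \<bullet> (H *v b) = l + eta" unfolding Hv e using bb by (simp add: inner_add_right)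
      ultimately show "H *v b = (b \<bullet> (H *v b)) *\<^sub>R b" by simp
    qed
    show ?thesis unfolding eig_onb_def by (intro conjI Hs He eig_onbD(2,3,5)[OF BA])
  qed
  have Hnn: "\<forall>b\<in>B. 0 \<le> b \<bullet> (H *v b)"
    unfolding Hv using eta by (simp add: inner_add_right XAX)
  have Sprops: "psd S" "S ** S = H" using msqrt_props[OF BH Hnn] unfolding S_def by auto
  have Ssym: "transpose S = S" using Sprops(1) unfolding psd_def by simp
  have Hq: "w \<bullet> (H *v w) = (X *v w) \<bullet> (X *v w) + eta * (w \<bullet> w)" for w
    unfolding Hv by (simp add: inner_add_right XAX)
  have Hlam: "lam * (w \<bullet> w) \<le> w \<bullet> (H *v w)" for w
    using lambda_min_le[OF BA, of w] unfolding Hv lam_def by (simp add: inner_add_right algebra_simps)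
  have nv2: "nv\<^sup>2 = (\<Sum>i\<in>UNIV. V$i \<bullet> (H *v V$i))"
  proof -
    have "(norm ((V ** S)$i))\<^sup>2 = V$i \<bullet> (H *v V$i)" for i
    proof -
      have "(V ** S)$i = S *v V$i" unfolding row_mult
        using transpose_matrix_vector[of S "V$i"] Ssym by simp
      hence "(norm ((V ** S)$i))\<^sup>2 = (S *v V$i) \<bullet> (S *v V$i)" by (simp add: power2_norm_eq_inner)
      also have "\<dots> = V$i \<bullet> (S *v (S *v V$i))" using sym_inner[OF Ssym] by simp
      also have "\<dots> = V$i \<bullet> (H *v V$i)" using Sprops(2) by (simp add: matrix_vector_mul_assoc)
      finally show ?thesis .
    qed
    thus ?thesis unfolding nvS norm_sq_rows by simp
  qed
  have nvnn: "nv \<ge> 0" unfolding nvS by simp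
  have nxv: "norm (X ** transpose V) \<le> nv"
  proof -
    have "(norm (V ** transpose X))\<^sup>2 = (\<Sum>i\<in>UNIV. (X *v V$i) \<bullet> (X *v V$i))"
      unfolding norm_sq_rows row_mult by (simp add: power2_norm_eq_inner)
    also have "\<dots> \<le> nv\<^sup>2" unfolding nv2 Hq using eta
      by (intro sum_mono) (simp)
    finally have "norm (V ** transpose X) \<le> nv" using nvnn by (rule power2_le_imp_le)
    moreover have "transpose (V ** transpose X) = X ** transpose V" by (simp add: matrix_transpose_mul)
    ultimately show ?thesis using norm_transpose[of "V ** transpose X"] by simp
  qed
  have nV: "lam * (norm V)\<^sup>2 \<le> nv\<^sup>2"
  proof -
    have "lam * (norm V)\<^sup>2 = (\<Sum>i\<in>UNIV. lam * (V$i \<bullet> V$i))"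
      unfolding norm_sq_rows by (simp add: power2_norm_eq_inner sum_distrib_left)
    also have "\<dots> \<le> nv\<^sup>2" unfolding nv2 by (intro sum_mono Hlam)
    finally show ?thesis .
  qed
  define q where "q = norm (V ** transpose V)"
  have q: "q \<le> nv\<^sup>2 / lam"
  proof -
    have "lam * q \<le> lam * (norm V)\<^sup>2" unfolding q_def using lampos norm_VVt[of V] by (intro mult_left_mono) auto
    hence "lam * q \<le> nv\<^sup>2" using nV by linarith
    thus ?thesis using lampos by (simp add: pos_le_divide_eq mult.commute)
  qed
  have qnn: "q \<ge> 0" unfolding q_def by simp
  have L0: "L \<ge> 0"
  proof -
    define E :: "real^'n^'n" where "E = (\<chi> a b. 1)"
    define i :: 'n where "i = undefined"
    have "E $ i $ i \<noteq> (0::real^'n^'n) $ i $ i" by (simp add: E_def)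
    hence "E \<noteq> 0" by auto
    hence "norm E > 0" by simp
    moreover have "0 \<le> L * norm E"
    proof -
      have "norm (gradient phi (Mstar + E) - gradient phi Mstar) \<le> L * norm E" using lip by blast
      moreover have "0 \<le> norm (gradient phi (Mstar + E) - gradient phi Mstar)" by simp
      ultimately show ?thesis by linarith
    qed
    ultimately show ?thesis by (simp add: zero_le_mult_iff)
  qed
  have Gs0: "gradient phi Mstar = 0"
  proof -
    have "(\<lambda>h. gradient phi Mstar \<bullet> h) = (\<lambda>h. 0)"
      by (rule has_derivative_local_min[OF grad_deriv'[OF diff[rule_format]]]) (use argmin in auto)
    hence "gradient phi Mstar \<bullet> gradient phi Mstar = 0" by (rule fun_cong)
    thus ?thesis by simp
  qed
  have nG: "norm G \<le> L * D"
    using lip[rule_format, of Mstar "M - Mstar"] unfolding G_def D_def Gs0 by simp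
  define E where "E = X ** transpose V + V ** transpose X + V ** transpose V"
  have expand: "(X + V) ** transpose (X + V) = M + E"
    unfolding M_def E_def
    by (simp add: matrix_matrix_mult_def transpose_def vec_eq_iff sum.distrib algebra_simps)
  have desc: "phi (M + E) \<le> phi M + G \<bullet> E + L / 2 * (norm E)\<^sup>2"
    unfolding G_def by (rule descent[OF diff lip])
  have gradf: "gradient f X \<bullet> V = G \<bullet> (X ** transpose V + V ** transpose X)"
  proof -
    have "(f has_derivative (\<lambda>h. G \<bullet> (X ** transpose h + h ** transpose X))) (at X)"
      unfolding f_def G_def M_def
      by (rule has_derivative_compose[OF d_sq grad_deriv'[OF diff[rule_format]]])
    from grad_deriv(2)[OF this] show ?thesis .
  qed
  have GE: "G \<bullet> E = G \<bullet> (X ** transpose V + V ** transpose X) + G \<bullet> (V ** transpose V)"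
    unfolding E_def by (simp add: inner_add_right)
  have Gq: "G \<bullet> (V ** transpose V) \<le> L * D * (nv\<^sup>2 / lam)"
  proof -
    have "G \<bullet> (V ** transpose V) \<le> norm G * q" unfolding q_def by (rule norm_cauchy_schwarz)
    also have "\<dots> \<le> (L * D) * (nv\<^sup>2 / lam)"
      using nG q qnn L0 by (intro mult_mono) (auto simp: D_def)
    finally show ?thesis by simp
  qed
  have nE: "norm E \<le> 2 * nv + nv\<^sup>2 / lam"
  proof -
    have t1: "norm E \<le> norm (X ** transpose V + V ** transpose X) + q"
      unfolding E_def q_def by (rule norm_triangle_ineq)
    have t2: "norm (X ** transpose V + V ** transpose X) \<le> norm (X ** transpose V) + norm (V ** transpose X)"
      by (rule norm_triangle_ineq)
    from t1 t2 have "norm E \<le> norm (X ** transpose V) + norm (V ** transpose X) + q" by linarith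
    moreover have "norm (V ** transpose X) = norm (X ** transpose V)"
    proof -
      have "transpose (X ** transpose V) = V ** transpose X" by (simp add: matrix_transpose_mul)
      thus ?thesis using norm_transpose[of "X ** transpose V"] by simp
    qed
    ultimately show ?thesis using nxv q by linarith
  qed
  have nE2: "L / 2 * (norm E)\<^sup>2 \<le> L / 2 * (2 * nv + nv\<^sup>2 / lam)\<^sup>2"
    using nE L0 by (intro mult_left_mono power_mono) auto
  have final: "L * D * (nv\<^sup>2 / lam) + L / 2 * (2 * nv + nv\<^sup>2 / lam)\<^sup>2
      = L * (4 + (2 * D + 4 * nv) / lam + (nv / lam)\<^sup>2) / 2 * nv\<^sup>2"
    using lampos by (simp add: field_simps power2_eq_square)
  have "f (X + V) \<le> f X + gradient f X \<bullet> V + L * (4 + (2 * D + 4 * nv) / lam + (nv / lam)\<^sup>2) / 2 * nv\<^sup>2"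
  proof -
    have "f (X + V) = phi (M + E)" unfolding f_def expand ..
    moreover have "f X = phi M" unfolding f_def M_def ..
    ultimately show ?thesis using desc gradf GE Gq nE2 final by linarith
  qed
  thus ?thesis unfolding Let_def f_def[symmetric] lam_def[symmetric] A_def[symmetric] nv_def[symmetric]
    M_def[symmetric] D_def[symmetric] .
qed

end
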